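(* Let $H=(V,E)$ be a $3$-uniform hypergraph in which every vertex has even degree, and let $G=\mathcal G(H)$ be its incidence graph. The following are equivalent: (1) $H$ is quasi-eulerian; (2) $G$ has a spanning subgraph in which every v-vertex has even degree and every e-vertex has degree exactly $1$; (3) $E$ can be partitioned into pairs $\{e,e'\}$ of distinct edges with $e\cap e'\ne\emptyset$.
   Context: A hypergraph $H=(V,E)$ consists of a finite nonempty vertex set $V$, a finite edge set $E$ disjoint from $V$, and an incidence function assigning to each edge $e\in E$ a subset of $V$ (also denoted $e$); distinct edges may have the same vertex set. $H$ is $3$-uniform if $|e|=3$ for all $e\in E$. The degree of a vertex is the number of edges containing it. A walk is a sequence $W=v_0e_1v_1e_2\cdots e_kv_k$ with $v_i\in V$, $e_i\in E$, such that for each $i$, $v_{i-1}\ne v_i$ and $v_{i-1},v_i\in e_i$; the $v_i$ are its anchors. $W$ is closed if $k\ge 2$ and $v_0=v_k$; it is a strict trail if $e_1,\dots,e_k$ are pairwise distinct. An Euler family of $H$ is a family of closed strict trails such that every edge of $H$ lies in exactly one trail and no two trails have a common anchor; $H$ is quasi-eulerian if it has one. The incidence graph $\mathcal G(H)$ is the simple bipartite graph with vertex set $V\cup E$ in which $v\in V$ and $e\in E$ are adjacent iff $v\in e$; vertices in $V$ are v-vertices and those in $E$ e-vertices. *)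

theory Defs
  imports Main "HOL-Library.Disjoint_Sets"
begin

text \<open>A hypergraph is given by a vertex set V, an edge set E (of a different type, hence
disjoint from V) and an incidence function inc assigning to each edge its vertex set.\<close>

definition hypergraph :: "'v set \<Rightarrow> 'e set \<Rightarrow> ('e \<Rightarrow> 'v set) \<Rightarrow> bool" where
  "hypergraph V E inc \<longleftrightarrow> finite V \<and> V \<noteq> {} \<and> finite E \<and> (\<forall>e\<in>E. inc e \<subseteq> V)"

definition uniform3 :: "'e set \<Rightarrow> ('e \<Rightarrow> 'v set) \<Rightarrow> bool" where
  "uniform3 E inc \<longleftrightarrow> (\<forall>e\<in>E. card (inc e) = 3)"

definition hdegree :: "'e set \<Rightarrow> ('e \<Rightarrow> 'v set) \<Rightarrow> 'v \<Rightarrow> nat" where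
  "hdegree E inc v = card {e\<in>E. v \<in> inc e}"

text \<open>A walk v0 e1 v1 ... ek vk is represented by the anchor list vs = [v0,...,vk]
and the edge list es = [e1,...,ek].\<close>

definition is_walk :: "'v set \<Rightarrow> 'e set \<Rightarrow> ('e \<Rightarrow> 'v set) \<Rightarrow> 'v list \<Rightarrow> 'e list \<Rightarrow> bool" where
  "is_walk V E inc vs es \<longleftrightarrow>
     length vs = Suc (length es) \<and> set vs \<subseteq> V \<and> set es \<subseteq> E \<and>
     (\<forall>i < length es. vs ! i \<noteq> vs ! Suc i \<and> vs ! i \<in> inc (es ! i) \<and> vs ! Suc i \<in> inc (es ! i))"

definition closed_strict_trail ::
  "'v set \<Rightarrow> 'e set \<Rightarrow> ('e \<Rightarrow> 'v set) \<Rightarrow> 'v list \<Rightarrow> 'e list \<Rightarrow> bool" where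
  "closed_strict_trail V E inc vs es \<longleftrightarrow>
     is_walk V E inc vs es \<and> length es \<ge> 2 \<and> hd vs = last vs \<and> distinct es"

definition euler_family ::
  "'v set \<Rightarrow> 'e set \<Rightarrow> ('e \<Rightarrow> 'v set) \<Rightarrow> ('v list \<times> 'e list) set \<Rightarrow> bool" where
  "euler_family V E inc F \<longleftrightarrow>
     (\<forall>T\<in>F. closed_strict_trail V E inc (fst T) (snd T)) \<and>
     (\<forall>e\<in>E. \<exists>!T. T \<in> F \<and> e \<in> set (snd T)) \<and>
     (\<forall>T\<in>F. \<forall>T'\<in>F. T \<noteq> T' \<longrightarrow> set (fst T) \<inter> set (fst T') = {})"

definition quasi_eulerian :: "'v set \<Rightarrow> 'e set \<Rightarrow> ('e \<Rightarrow> 'v set) \<Rightarrow> bool" where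
  "quasi_eulerian V E inc \<longleftrightarrow> (\<exists>F. euler_family V E inc F)"

text \<open>Incidence graph: bipartite graph on V + E; its edge set is represented as the set of
incident pairs (v,e). A spanning subgraph is given by a subset of these pairs.\<close>

definition incidence_edges :: "'v set \<Rightarrow> 'e set \<Rightarrow> ('e \<Rightarrow> 'v set) \<Rightarrow> ('v \<times> 'e) set" where
  "incidence_edges V E inc = {(v, e). v \<in> V \<and> e \<in> E \<and> v \<in> inc e}"

definition even_one_factor_subgraph ::
  "'v set \<Rightarrow> 'e set \<Rightarrow> ('e \<Rightarrow> 'v set) \<Rightarrow> ('v \<times> 'e) set \<Rightarrow> bool" where
  "even_one_factor_subgraph V E inc S \<longleftrightarrow>
     S \<subseteq> incidence_edges V E inc \<and>
     (\<forall>v\<in>V. even (card {e. (v, e) \<in> S})) \<and>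
     (\<forall>e\<in>E. card {v. (v, e) \<in> S} = 1)"

definition intersecting_pair_partition ::
  "'e set \<Rightarrow> ('e \<Rightarrow> 'v set) \<Rightarrow> 'e set set \<Rightarrow> bool" where
  "intersecting_pair_partition E inc P \<longleftrightarrow>
     partition_on E P \<and>
     (\<forall>p\<in>P. \<exists>e e'. p = {e, e'} \<and> e \<noteq> e' \<and> inc e \<inter> inc e' \<noteq> {})"

end

theory Submission
  imports Defs
begin


fun wk :: "('e \<Rightarrow> 'v set) \<Rightarrow> 'v list \<Rightarrow> 'e list \<Rightarrow> bool" where
  "wk P [v] [] = True"
| "wk P (v # w # vs) (e # es) = (v \<noteq> w \<and> v \<in> P e \<and> w \<in> P e \<and> wk P (w # vs) es)"
| "wk P _ _ = False"

lemma all_less_Suc_split: "(\<forall>i<Suc n. Q i) \<longleftrightarrow> Q 0 \<and> (\<forall>i<n. Q (Suc i))"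
  by (auto simp: less_Suc_eq_0_disj)

lemma wk_nth: "wk P vs es \<longleftrightarrow> length vs = Suc (length es) \<and>
  (\<forall>i<length es. vs!i \<noteq> vs!Suc i \<and> vs!i \<in> P (es!i) \<and> vs!Suc i \<in> P (es!i))"
proof (induction es arbitrary: vs)
  case Nil
  then show ?case by (cases vs; cases "tl vs") auto
next
  case (Cons e es)
  note IH = Cons.IH
  show ?case
  proof (cases vs)
    case Nil then show ?thesis by simp
  next
    case (Cons v vs')
    show ?thesis
    proof (cases vs')
      case Nil then show ?thesis using \<open>vs = v # vs'\<close> by simp
    next
      case (Cons w vs'')
      have "wk P vs (e # es) = (v \<noteq> w \<and> v \<in> P e \<and> w \<in> P e \<and> wk P (w # vs'') es)"
        using Cons \<open>vs = v # vs'\<close> by simp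
      also have "\<dots> = (length vs = Suc (length (e # es)) \<and>
  (\<forall>i<length (e#es). vs!i \<noteq> vs!Suc i \<and> vs!i \<in> P ((e#es)!i) \<and> vs!Suc i \<in> P ((e#es)!i)))"
        unfolding IH[of "w # vs''"] using Cons \<open>vs = v # vs'\<close>
        by (simp only: length_Cons all_less_Suc_split nth_Cons_0 nth_Cons_Suc Suc_inject) blast
      finally show ?thesis .
    qed
  qed
qed

lemma wk_ne: "wk P vs es \<Longrightarrow> vs \<noteq> []"
  by (induction P vs es rule: wk.induct) auto

lemma wk_len: "wk P vs es \<Longrightarrow> length vs = Suc (length es)"
  using wk_nth by blast

lemma wk_concat: "wk P xs es1 \<Longrightarrow> wk P ys es2 \<Longrightarrow> last xs = hd ys \<Longrightarrow> wk P (xs @ tl ys) (es1 @ es2)"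
proof (induction P xs es1 rule: wk.induct)
  case (1 P v)
  then show ?case using wk_ne[of P ys es2] by (cases ys) auto
next
  case (2 P v w vs e es)
  then show ?case by auto
qed auto

lemma wk_last_concat: "last xs = hd ys \<Longrightarrow> ys \<noteq> [] \<Longrightarrow> last (xs @ tl ys) = last ys"
  by (cases ys) auto

lemma wk_set_concat: "last xs = hd ys \<Longrightarrow> ys \<noteq> [] \<Longrightarrow> xs \<noteq> [] \<Longrightarrow> set (xs @ tl ys) = set xs \<union> set ys"
  by (cases ys) auto

lemma wk_split: "wk P vs es \<Longrightarrow> x \<in> set vs \<Longrightarrow>
  \<exists>p q es1 es2. vs = p @ x # q \<and> es = es1 @ es2 \<and> wk P (p @ [x]) es1 \<and> wk P (x # q) es2"
proof (induction P vs es rule: wk.induct)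
  case (1 P v)
  then show ?case by (intro exI[of _ "[]"]) auto
next
  case (2 P v w vs e es)
  show ?case
  proof (cases "x = v")
    case True
    then show ?thesis using 2 by (intro exI[of _ "[]"] exI[of _ "w#vs"] exI[of _ "[]"] exI[of _ "e#es"]) auto
  next
    case False
    with 2 obtain p q es1 es2 where h: "w # vs = p @ x # q" "es = es1 @ es2" "wk P (p @ [x]) es1" "wk P (x # q) es2"
      by auto
    have "wk P (v # p @ [x]) (e # es1)"
    proof (cases p)
      case Nil then show ?thesis using h 2 by auto
    next
      case (Cons a p') then show ?thesis using h 2 by auto
    qed
    then show ?thesis using h by (intro exI[of _ "v#p"] exI[of _ q] exI[of _ "e#es1"] exI[of _ es2]) auto
  qed
qed auto

lemma wk_mono: "wk P vs es \<Longrightarrow> (\<forall>e\<in>set es. P e \<subseteq> Q e) \<Longrightarrow> wk Q vs es"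
  by (induction P vs es rule: wk.induct) auto

lemma wk_set: "wk P vs es \<Longrightarrow> es \<noteq> [] \<Longrightarrow> set vs \<subseteq> \<Union>(P ` set es)"
proof (induction P vs es rule: wk.induct)
  case (2 P v w vs e es)
  show ?case
  proof (cases es)
    case Nil
    then have "vs = []" using 2 by (cases vs) auto
    then show ?thesis using 2 by auto
  next
    case (Cons a l)
    then show ?thesis using 2 by auto
  qed
qed auto

lemma two_elem: "card X = 2 \<Longrightarrow> a \<in> X \<Longrightarrow> b \<in> X \<Longrightarrow> a \<noteq> b \<Longrightarrow> X = {a,b}"
  by (metis card_2_iff doubleton_eq_iff insertE singletonD)

lemma wk_edge_sub: "wk D vs es \<Longrightarrow> \<forall>e\<in>set es. card (D e) = 2 \<Longrightarrow> e \<in> set es \<Longrightarrow> D e \<subseteq> set vs"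
proof (induction D vs es rule: wk.induct)
  case (2 P v w vs e' es)
  then show ?case using two_elem[of "P e'" v w] by auto
qed auto

lemma wk_hd_edge: "wk D vs es \<Longrightarrow> distinct vs \<Longrightarrow> \<forall>e\<in>set es. card (D e) = 2 \<Longrightarrow> e \<in> set es
   \<Longrightarrow> hd vs \<in> D e \<Longrightarrow> e = hd es"
proof (induction D vs es rule: wk.induct)
  case (2 P v w vs e' es)
  show ?case
  proof (rule ccontr)
    assume "e \<noteq> hd (e' # es)"
    then have "e \<in> set es" using 2 by auto
    then have "P e \<subseteq> set (w # vs)" using wk_edge_sub[of P "w#vs" es e] 2 by auto
    then show False using 2 by auto
  qed
qed auto

lemma wk_count: "wk D vs es \<Longrightarrow> \<forall>e\<in>set es. card (D e) = 2 \<Longrightarrow>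
  length (filter (\<lambda>e. v \<in> D e) es) = count_list (butlast vs) v + count_list (tl vs) v"
proof (induction D vs es rule: wk.induct)
  case (2 P a w vs e es)
  then have "P e = {a, w}" using two_elem[of "P e" a w] by auto
  with 2 show ?case by (cases vs) auto
qed auto

lemma count_closed: "hd vs = last vs \<Longrightarrow> vs \<noteq> [] \<Longrightarrow> count_list (butlast vs) v = count_list (tl vs) v"
proof (cases vs)
  case (Cons a rest)
  assume h: "hd vs = last vs"
  show ?thesis
  proof (cases rest)
    case Nil then show ?thesis using Cons by simp
  next
    case (Cons b r)
    then have "rest = butlast rest @ [a]" using h \<open>vs = a # rest\<close> by simp
    then have "count_list rest v = count_list (butlast rest) v + count_list [a] v"
      by (metis count_list_append)
    then show ?thesis using \<open>vs = a # rest\<close> Cons by (auto simp: butlast.simps)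
  qed
qed simp

lemma wk_even: "wk D vs es \<Longrightarrow> \<forall>e\<in>set es. card (D e) = 2 \<Longrightarrow> hd vs = last vs \<Longrightarrow> distinct es \<Longrightarrow>
  even (card {e\<in>set es. v \<in> D e})"
proof -
  assume a: "wk D vs es" "\<forall>e\<in>set es. card (D e) = 2" "hd vs = last vs" "distinct es"
  have "card {e\<in>set es. v \<in> D e} = length (filter (\<lambda>e. v \<in> D e) es)"
    using a(4) by (metis distinct_card distinct_filter set_filter)
  also have "\<dots> = 2 * count_list (tl vs) v"
    using wk_count[OF a(1,2)] count_closed[OF a(3) wk_ne[OF a(1)]] by simp
  finally show ?thesis by simp
qed



definition ct :: "('e \<Rightarrow> 'v set) \<Rightarrow> 'e set \<Rightarrow> 'v list \<times> 'e list \<Rightarrow> bool" where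
  "ct D A T \<longleftrightarrow> wk D (fst T) (snd T) \<and> distinct (snd T) \<and> set (snd T) \<subseteq> A \<and>
     2 \<le> length (snd T) \<and> hd (fst T) = last (fst T)"

lemma cycle_exists:
  assumes fin: "finite A" and ne: "A \<noteq> {}" and c2: "\<forall>e\<in>A. card (D e) = 2"
    and ev: "\<forall>v. even (card {e\<in>A. v \<in> D e})"
  shows "\<exists>C. ct D A C"
proof -
  define Q where "Q = (\<lambda>(vs, es). wk D vs es \<and> distinct vs \<and> distinct es \<and> set es \<subseteq> A \<and> es \<noteq> [])"
  obtain e where e: "e \<in> A" using ne by blast
  then obtain a b where ab: "D e = {a,b}" "a \<noteq> b" using c2 card_2_iff by metis
  have "Q ([a,b],[e])" unfolding Q_def using ab e by auto
  moreover have "\<forall>y. Q y \<longrightarrow> length (snd y) < Suc (card A)"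
  proof (intro allI impI)
    fix y assume "Q y"
    then have "distinct (snd y)" "set (snd y) \<subseteq> A" unfolding Q_def by auto
    then have "card (set (snd y)) \<le> card A" using card_mono[OF fin] by blast
    then show "length (snd y) < Suc (card A)" using distinct_card[OF \<open>distinct (snd y)\<close>] by simp
  qed
  ultimately obtain P where P: "Q P" and mx: "\<forall>y. Q y \<longrightarrow> length (snd y) \<le> length (snd P)"
    using ex_has_greatest_nat[of Q _ "\<lambda>y. length (snd y)"] by blast
  obtain vs es where Pe: "P = (vs, es)" by fastforce
  have q: "wk D vs es" "distinct vs" "distinct es" "set es \<subseteq> A" "es \<noteq> []"
    using P Pe unfolding Q_def by auto
  obtain e1 es' where es: "es = e1 # es'" using q(5) by (cases es) auto
  obtain v0 vs' where vs: "vs = v0 # vs'" using wk_ne[OF q(1)] by (cases vs) auto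
  have c2': "\<forall>e\<in>set es. card (D e) = 2" using q(4) c2 by auto
  have v0e1: "v0 \<in> D e1" using q(1) es vs by (cases vs') auto
  have e1A: "e1 \<in> A" using q(4) es by auto
  have "\<exists>f\<in>A. v0 \<in> D f \<and> f \<noteq> e1"
  proof (rule ccontr)
    assume nf: "\<not> (\<exists>f\<in>A. v0 \<in> D f \<and> f \<noteq> e1)"
    have "{e\<in>A. v0 \<in> D e} = {e1}"
    proof
      show "{e1} \<subseteq> {e\<in>A. v0 \<in> D e}" using v0e1 e1A by simp
      show "{e\<in>A. v0 \<in> D e} \<subseteq> {e1}" using nf by force
    qed
    then show False using ev[rule_format, of v0] by simp
  qed
  then obtain f where f: "f \<in> A" "v0 \<in> D f" "f \<noteq> e1" by blast
  then obtain w where w: "w \<in> D f" "w \<noteq> v0"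
  proof -
    obtain a b where "D f = {a,b}" "a \<noteq> b" using c2 f(1) card_2_iff by metis
    then show ?thesis using that f(2) by blast
  qed
  have fnot: "f \<notin> set es"
    using wk_hd_edge[OF q(1) q(2) c2'] f vs es by auto
  show ?thesis
  proof (cases "w \<in> set vs")
    case False
    have QQ: "Q (w # vs, f # es)" unfolding Q_def using q False f w fnot vs by auto
    show ?thesis using mx[rule_format, OF QQ] Pe by simp
  next
    case True
    obtain p q' es1 es2 where sp: "vs = p @ w # q'" "es = es1 @ es2" "wk D (p @ [w]) es1" "wk D (w # q') es2"
      using wk_split[OF q(1) True] by (elim exE conjE) (rule that)
    obtain p' where p: "p = v0 # p'" using sp(1) vs w(2) by (cases p) auto
    have wk1: "wk D (w # v0 # p' @ [w]) (f # es1)" using sp(3) p w f by simp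
    have "length es1 \<ge> 1" using wk_len[OF sp(3)] p by simp
    then have "ct D A (w # v0 # p' @ [w], f # es1)"
      unfolding ct_def using wk1 q(3,4) sp(2) fnot f(1) by auto
    then show ?thesis by blast
  qed
qed

lemma splice:
  assumes C: "ct D A C" and T: "ct D A T" and x: "set (fst T) \<inter> set (fst C) \<noteq> {}"
    and dj: "set (snd T) \<inter> set (snd C) = {}"
  shows "\<exists>C'. ct D A C' \<and> set (fst C') = set (fst C) \<union> set (fst T) \<and> set (snd C') = set (snd C) \<union> set (snd T)"
proof -
  obtain cs ces where Ce: "C = (cs, ces)" by fastforce
  obtain ts tes where Te: "T = (ts, tes)" by fastforce
  note C' = C[unfolded ct_def Ce, simplified] and T' = T[unfolded ct_def Te, simplified]
  obtain x where x: "x \<in> set ts" "x \<in> set cs" using x Ce Te by auto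
  obtain p q a1 a2 where sc: "cs = p @ x # q" "ces = a1 @ a2" "wk D (p @ [x]) a1" "wk D (x # q) a2"
    using wk_split[of D cs ces x] C' x by blast
  obtain r s b1 b2 where st: "ts = r @ x # s" "tes = b1 @ b2" "wk D (r @ [x]) b1" "wk D (x # s) b2"
    using wk_split[of D ts tes x] T' x by blast
  have hl: "last (x # s) = hd (r @ [x])" using T' st(1) by (cases r) auto
  define R where "R = (x # s) @ tl (r @ [x])"
  have R: "wk D R (b2 @ b1)" unfolding R_def using wk_concat[OF st(4) st(3) hl] .
  have Rh: "hd R = x" "last R = x" unfolding R_def using wk_last_concat[OF hl] by auto
  have Rs: "set R = set ts" unfolding R_def using wk_set_concat[OF hl] st(1) by auto
  define W1 where "W1 = (p @ [x]) @ tl R"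
  have W1: "wk D W1 (a1 @ (b2 @ b1))" unfolding W1_def using wk_concat[OF sc(3) R] Rh by simp
  have RN: "R \<noteq> []" using wk_ne[OF R] .
  have W1l: "last W1 = x" unfolding W1_def using wk_last_concat[of "p @ [x]" R] Rh RN by simp
  define W where "W = W1 @ tl (x # q)"
  have W: "wk D W ((a1 @ (b2 @ b1)) @ a2)" unfolding W_def using wk_concat[OF W1 sc(4)] W1l by simp
  have W1s: "set W1 = set (p @ [x]) \<union> set R" unfolding W1_def using wk_set_concat[of "p@[x]" R] Rh RN by simp
  have Ws: "set W = set W1 \<union> set (x # q)" unfolding W_def using wk_set_concat[of W1 "x # q"] W1l
    by (simp add: W1_def)
  have Wh: "hd W = hd cs" unfolding W_def W1_def sc(1) by (cases p) auto
  have Wl: "last W = last cs" unfolding W_def sc(1) using W1l by (cases q) auto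
  have "ct D A (W, (a1 @ (b2 @ b1)) @ a2)"
    unfolding ct_def using W Wh Wl C' T' sc st dj Ce Te by auto
  moreover have "set W = set cs \<union> set ts" using Ws W1s Rs sc(1) by auto
  ultimately show ?thesis using Ce Te sc st by (intro exI[of _ "(W, (a1 @ (b2 @ b1)) @ a2)"]) auto
qed



lemma ct_mono: "ct D A T \<Longrightarrow> A \<subseteq> B \<Longrightarrow> ct D B T"
  unfolding ct_def by auto

lemma merge:
  assumes "finite M"
  shows "ct D A C0 \<Longrightarrow> \<forall>T\<in>M. ct D A T \<and> set (fst T) \<inter> set (fst C0) \<noteq> {} \<Longrightarrow>
    \<forall>T\<in>M. set (snd T) \<inter> set (snd C0) = {} \<Longrightarrow>
    \<forall>T\<in>M. \<forall>T'\<in>M. T \<noteq> T' \<longrightarrow> set (snd T) \<inter> set (snd T') = {} \<Longrightarrow>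
    \<exists>C0'. ct D A C0' \<and> set (fst C0') = set (fst C0) \<union> \<Union>((set \<circ> fst) ` M) \<and>
       set (snd C0') = set (snd C0) \<union> \<Union>((set \<circ> snd) ` M)"
  using assms
proof (induction M rule: finite_induct)
  case empty
  show ?case using empty by (intro exI[of _ C0]) auto
next
  case (insert T M)
  have h1: "\<forall>T\<in>M. ct D A T \<and> set (fst T) \<inter> set (fst C0) \<noteq> {}" using insert.prems(2) by blast
  have h2: "\<forall>T\<in>M. set (snd T) \<inter> set (snd C0) = {}" using insert.prems(3) by blast
  have h3: "\<forall>Ta\<in>M. \<forall>T'\<in>M. Ta \<noteq> T' \<longrightarrow> set (snd Ta) \<inter> set (snd T') = {}"
    using insert.prems(4) by blast
  obtain C0'' where C0'': "ct D A C0''" "set (fst C0'') = set (fst C0) \<union> \<Union>((set \<circ> fst) ` M)"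
      "set (snd C0'') = set (snd C0) \<union> \<Union>((set \<circ> snd) ` M)"
    using insert.IH[OF insert.prems(1) h1 h2 h3] by blast
  have T: "ct D A T" "set (fst T) \<inter> set (fst C0) \<noteq> {}" "set (snd T) \<inter> set (snd C0) = {}"
    using insert.prems(2,3) by auto
  have dM: "\<forall>T'\<in>M. set (snd T) \<inter> set (snd T') = {}"
    using insert.prems(4) insert.hyps(2) by (metis insertCI)
  have a: "set (fst T) \<inter> set (fst C0'') \<noteq> {}" using T(2) C0''(2) by blast
  have b: "set (snd T) \<inter> set (snd C0'') = {}" using T(3) dM C0''(3) by auto
  obtain C0' where "ct D A C0'" "set (fst C0') = set (fst C0'') \<union> set (fst T)"
     "set (snd C0') = set (snd C0'') \<union> set (snd T)"
    using splice[OF C0''(1) T(1) a b] by blast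
  then show ?case using C0'' by (intro exI[of _ C0']) auto
qed

lemma euler:
  "finite A \<Longrightarrow> \<forall>e\<in>A. card (D e) = 2 \<Longrightarrow> \<forall>v. even (card {e\<in>A. v \<in> D e}) \<Longrightarrow>
   \<exists>F. finite F \<and> (\<forall>T\<in>F. ct D A T) \<and> (\<forall>e\<in>A. \<exists>!T. T \<in> F \<and> e \<in> set (snd T)) \<and>
      (\<forall>T\<in>F. \<forall>T'\<in>F. T \<noteq> T' \<longrightarrow> set (fst T) \<inter> set (fst T') = {})"
proof (induction "card A" arbitrary: A rule: less_induct)
  case less
  note fin = less.prems(1) and c2 = less.prems(2) and ev = less.prems(3)
  show ?case
  proof (cases "A = {}")
    case True
    then show ?thesis by (intro exI[of _ "{}"]) auto
  next
    case False
    obtain C where C: "ct D A C" using cycle_exists[OF fin False c2 ev] by blast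
    define A' where "A' = A - set (snd C)"
    have CA: "set (snd C) \<subseteq> A" "snd C \<noteq> []" using C unfolding ct_def by auto
    have finA': "finite A'" using fin A'_def by simp
    have lt: "card A' < card A" unfolding A'_def using CA fin
      by (metis Diff_eq_empty_iff card_Diff_subset card_gt_0_iff diff_less finite_subset set_empty2
          subset_empty)
    have c2': "\<forall>e\<in>A'. card (D e) = 2" using c2 A'_def by auto
    have ev': "\<forall>v. even (card {e\<in>A'. v \<in> D e})"
    proof
      fix v
      have s: "{e\<in>A'. v \<in> D e} = {e\<in>A. v \<in> D e} - {e\<in>set (snd C). v \<in> D e}"
        unfolding A'_def by auto
      have sub: "{e\<in>set (snd C). v \<in> D e} \<subseteq> {e\<in>A. v \<in> D e}" using CA by auto
      have e1: "even (card {e\<in>set (snd C). v \<in> D e})"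
        using wk_even[of D "fst C" "snd C" v] C c2 CA unfolding ct_def by auto
      have le: "card {e\<in>set (snd C). v \<in> D e} \<le> card {e\<in>A. v \<in> D e}"
        using card_mono[OF _ sub] fin by auto
      have "card {e\<in>A'. v \<in> D e} = card {e\<in>A. v \<in> D e} - card {e\<in>set (snd C). v \<in> D e}"
        unfolding s by (rule card_Diff_subset) (use sub in auto)
      then show "even (card {e\<in>A'. v \<in> D e})" using e1 ev[rule_format, of v] le by auto
    qed
    obtain F' where F': "finite F'" "\<forall>T\<in>F'. ct D A' T" "\<forall>e\<in>A'. \<exists>!T. T \<in> F' \<and> e \<in> set (snd T)"
      "\<forall>T\<in>F'. \<forall>T'\<in>F'. T \<noteq> T' \<longrightarrow> set (fst T) \<inter> set (fst T') = {}"
      using less.hyps[OF lt finA' c2' ev'] by blast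
    have FA: "\<forall>T\<in>F'. ct D A T" using F'(2) ct_mono A'_def by blast
    have Fsub: "\<forall>T\<in>F'. set (snd T) \<subseteq> A'" using F'(2) unfolding ct_def by auto
    have edj: "\<forall>T\<in>F'. \<forall>T'\<in>F'. T \<noteq> T' \<longrightarrow> set (snd T) \<inter> set (snd T') = {}"
    proof (intro ballI impI)
      fix T T' assume "T \<in> F'" "T' \<in> F'" "T \<noteq> T'"
      show "set (snd T) \<inter> set (snd T') = {}"
      proof (rule ccontr)
        assume "set (snd T) \<inter> set (snd T') \<noteq> {}"
        then obtain e where e: "e \<in> set (snd T)" "e \<in> set (snd T')" by blast
        then have "e \<in> A'" using Fsub \<open>T \<in> F'\<close> by auto
        then show False using F'(3) e \<open>T \<in> F'\<close> \<open>T' \<in> F'\<close> \<open>T \<noteq> T'\<close> by blast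
      qed
    qed
    define M where "M = {T\<in>F'. set (fst T) \<inter> set (fst C) \<noteq> {}}"
    have finM: "finite M" using F'(1) M_def by simp
    have m1: "\<forall>T\<in>M. ct D A T \<and> set (fst T) \<inter> set (fst C) \<noteq> {}" using FA M_def by auto
    have m2: "\<forall>T\<in>M. set (snd T) \<inter> set (snd C) = {}"
    proof
      fix T assume "T \<in> M"
      then have "set (snd T) \<subseteq> A'" using Fsub M_def by auto
      then show "set (snd T) \<inter> set (snd C) = {}" using A'_def by auto
    qed
    have m3: "\<forall>T\<in>M. \<forall>T'\<in>M. T \<noteq> T' \<longrightarrow> set (snd T) \<inter> set (snd T') = {}" using edj M_def by auto
    obtain C' where C': "ct D A C'" "set (fst C') = set (fst C) \<union> \<Union>((set \<circ> fst) ` M)"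
       "set (snd C') = set (snd C) \<union> \<Union>((set \<circ> snd) ` M)"
      using merge[OF finM C m1 m2 m3] by blast
    define F where "F = insert C' (F' - M)"
    have CneF: "C' \<notin> F' - M"
    proof
      assume a: "C' \<in> F' - M"
      have "fst C \<noteq> []" using C wk_ne unfolding ct_def by blast
      then have "set (fst C') \<inter> set (fst C) \<noteq> {}" using C'(2) by auto
      then show False using a M_def by auto
    qed
    have P1: "finite F" using F'(1) F_def by simp
    have P2: "\<forall>T\<in>F. ct D A T" using F_def C'(1) FA by auto
    have P3: "\<forall>e\<in>A. \<exists>!T. T \<in> F \<and> e \<in> set (snd T)"
    proof
      fix e assume eA: "e \<in> A"
      show "\<exists>!T. T \<in> F \<and> e \<in> set (snd T)"
      proof (cases "e \<in> set (snd C')")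
        case True
        have "T = C'" if "T \<in> F" "e \<in> set (snd T)" for T
        proof (rule ccontr)
          assume "T \<noteq> C'"
          then have T: "T \<in> F'" "T \<notin> M" using that F_def by auto
          have "e \<notin> set (snd C)" using Fsub T(1) that(2) A'_def by auto
          then obtain T0 where T0: "T0 \<in> M" "e \<in> set (snd T0)" using True C'(3) by auto
          have "T0 \<in> F'" using T0 M_def by auto
          then have "T0 = T" using edj T(1) T0(2) that(2) by blast
          then show False using T0 T by simp
        qed
        moreover have "C' \<in> F" using F_def by simp
        ultimately show ?thesis using True by blast
      next
        case False
        then have eA': "e \<in> A'" using eA C'(3) A'_def by auto
        then obtain T0 where T0: "T0 \<in> F'" "e \<in> set (snd T0)" using F'(3) by blast
        have "T0 \<notin> M" using T0 False C'(3) by auto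
        then have T0F: "T0 \<in> F" using T0 F_def by simp
        have "T = T0" if "T \<in> F" "e \<in> set (snd T)" for T
        proof -
          have "T \<noteq> C'" using that False by auto
          then have "T \<in> F'" using that F_def by auto
          then show ?thesis using edj T0 that(2) by blast
        qed
        then show ?thesis using T0F T0(2) by blast
      qed
    qed
    have P4: "\<forall>T\<in>F. \<forall>T'\<in>F. T \<noteq> T' \<longrightarrow> set (fst T) \<inter> set (fst T') = {}"
    proof -
      have key: "set (fst C') \<inter> set (fst T) = {}" if "T \<in> F' - M" for T
      proof -
        have "set (fst T) \<inter> set (fst C) = {}" using that M_def by auto
        moreover have "set (fst T) \<inter> set (fst T0) = {}" if "T0 \<in> M" for T0
          using F'(4) \<open>T \<in> F' - M\<close> that M_def by (metis (no_types, lifting) DiffE mem_Collect_eq)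
        ultimately show ?thesis using C'(2) by auto
      qed
      show ?thesis
      proof (intro ballI impI)
        fix T T' assume a: "T \<in> F" "T' \<in> F" "T \<noteq> T'"
        show "set (fst T) \<inter> set (fst T') = {}"
        proof (cases "T = C'")
          case True
          have "T' \<in> F' - M" using a True F_def by auto
          then show ?thesis using key[of T'] True by auto
        next
          case False
          show ?thesis
          proof (cases "T' = C'")
            case True
            have "T \<in> F' - M" using a(1) False F_def by auto
            then show ?thesis using key[of T] True by auto
          next
            case False
            then show ?thesis using a \<open>T \<noteq> C'\<close> F_def F'(4) by auto
          qed
        qed
      qed
    qed
    show ?thesis using P1 P2 P3 P4 by blast
  qed
qed



lemma pairing: "finite X \<Longrightarrow> even (card X) \<Longrightarrow> \<exists>P. partition_on X P \<and> (\<forall>p\<in>P. card p = 2)"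
proof (induction "card X" arbitrary: X rule: less_induct)
  case less
  show ?case
  proof (cases "X = {}")
    case True
    then show ?thesis by (intro exI[of _ "{}"]) (auto simp: partition_on_def)
  next
    case False
    then obtain a where a: "a \<in> X" by blast
    have "card X \<noteq> 1" using less.prems(2) by auto
    then have "X - {a} \<noteq> {}" using a less.prems(1)
      by (metis Diff_empty Diff_insert0 card_1_singleton_iff insert_Diff One_nat_def)
    then obtain b where b: "b \<in> X" "b \<noteq> a" by blast
    define X' where "X' = X - {a,b}"
    have cX': "card X' = card X - 2" unfolding X'_def using a b less.prems(1)
      by (subst card_Diff_subset) auto
    have lt: "card X' < card X" using cX' a less.prems(1) False by (simp add: card_gt_0_iff)
    have ev: "even (card X')" using cX' less.prems(2) lt by auto
    obtain P' where P': "partition_on X' P'" "\<forall>p\<in>P'. card p = 2"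
      using less.hyps[OF lt _ ev] less.prems(1) X'_def by auto
    have U: "\<Union>P' = X'" "disjoint P'" "{} \<notin> P'" using P'(1) unfolding partition_on_def by auto
    have "partition_on X (insert {a,b} P')"
      unfolding partition_on_def
    proof (intro conjI)
      show "\<Union>(insert {a,b} P') = X" using U(1) X'_def a b by auto
      have dd: "\<forall>y\<in>P'. disjnt {a,b} y \<and> disjnt y {a,b}" using U(1) X'_def by (auto simp: disjnt_def)
      show "disjoint (insert {a, b} P')" unfolding pairwise_insert using dd U(2) by blast
      show "{} \<notin> insert {a, b} P'" using U(3) by auto
    qed
    moreover have "\<forall>p\<in>insert {a,b} P'. card p = 2" using P'(2) b by auto
    ultimately show ?thesis by blast
  qed
qed

lemma two_to_three:
  assumes S: "even_one_factor_subgraph V E inc S" and finE: "finite E"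
  shows "\<exists>P. intersecting_pair_partition E inc P"
proof -
  note Sd = S[unfolded even_one_factor_subgraph_def]
  have Ssub: "\<And>v e. (v,e) \<in> S \<Longrightarrow> v \<in> V \<and> e \<in> E \<and> v \<in> inc e"
    using Sd unfolding incidence_edges_def by auto
  have uniq: "v = w" if "(v,e) \<in> S" "(w,e) \<in> S" for v w e
  proof -
    have "card {v. (v, e) \<in> S} = 1" using Sd Ssub that(1) by blast
    then obtain u where "{v. (v, e) \<in> S} = {u}" using card_1_singleton_iff by (metis One_nat_def)
    then show ?thesis using that by (metis mem_Collect_eq singletonD)
  qed
  define X where "X v = {e. (v,e) \<in> S}" for v
  have "\<forall>v\<in>V. \<exists>P. partition_on (X v) P \<and> (\<forall>p\<in>P. card p = 2)"
  proof
    fix v assume v: "v \<in> V"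
    have "finite (X v)" using finE Ssub X_def by (metis (no_types, lifting) mem_Collect_eq rev_finite_subset subsetI)
    moreover have "even (card (X v))" using Sd v X_def by auto
    ultimately show "\<exists>P. partition_on (X v) P \<and> (\<forall>p\<in>P. card p = 2)" using pairing by blast
  qed
  then obtain f where f: "\<And>v. v \<in> V \<Longrightarrow> partition_on (X v) (f v) \<and> (\<forall>p\<in>f v. card p = 2)"
    by metis
  define P where "P = (\<Union>v\<in>V. f v)"
  have U: "\<Union>P = E"
  proof
    show "\<Union>P \<subseteq> E"
    proof
      fix e assume "e \<in> \<Union>P"
      then obtain v p where "v \<in> V" "p \<in> f v" "e \<in> p" using P_def by auto
      then have "e \<in> X v" using f[of v] unfolding partition_on_def by auto
      then show "e \<in> E" using Ssub X_def by auto
    qed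
    show "E \<subseteq> \<Union>P"
    proof
      fix e assume e: "e \<in> E"
      then have "card {v. (v, e) \<in> S} = 1" using Sd by blast
      then obtain v where "(v,e) \<in> S" by (metis One_nat_def card_1_singleton_iff singletonI mem_Collect_eq)
      then have "v \<in> V" "e \<in> X v" using Ssub X_def by auto
      then show "e \<in> \<Union>P" using f[of v] unfolding partition_on_def P_def by blast
    qed
  qed
  have dj: "disjoint P"
    unfolding pairwise_def
  proof (intro ballI impI)
    fix p q assume p: "p \<in> P" and q: "q \<in> P" and pq: "p \<noteq> q"
    obtain v where v: "v \<in> V" "p \<in> f v" using p P_def by auto
    obtain w where w: "w \<in> V" "q \<in> f w" using q P_def by auto
    show "disjnt p q"
    proof (cases "v = w")
      case True
      then show ?thesis using f[of v] v w pq unfolding partition_on_def pairwise_def by auto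
    next
      case False
      have "p \<subseteq> X v" using f[of v] v unfolding partition_on_def by auto
      moreover have "q \<subseteq> X w" using f[of w] w unfolding partition_on_def by auto
      ultimately show ?thesis using uniq False unfolding X_def disjnt_def by blast
    qed
  qed
  have ne: "{} \<notin> P" using f unfolding P_def by fastforce
  have pr: "\<forall>p\<in>P. \<exists>e e'. p = {e, e'} \<and> e \<noteq> e' \<and> inc e \<inter> inc e' \<noteq> {}"
  proof
    fix p assume "p \<in> P"
    then obtain v where v: "v \<in> V" "p \<in> f v" using P_def by auto
    then have "card p = 2" "p \<subseteq> X v" using f[of v] unfolding partition_on_def by auto
    then obtain e e' where "p = {e,e'}" "e \<noteq> e'" using card_2_iff by metis
    moreover have "v \<in> inc e" "v \<in> inc e'" using \<open>p \<subseteq> X v\<close> calculation Ssub X_def by auto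
    ultimately show "\<exists>e e'. p = {e, e'} \<and> e \<noteq> e' \<and> inc e \<inter> inc e' \<noteq> {}" by blast
  qed
  show ?thesis unfolding intersecting_pair_partition_def partition_on_def
    using U dj ne pr by blast
qed

lemma three_to_two:
  assumes P: "intersecting_pair_partition E inc P" and finE: "finite E"
    and sub: "\<forall>e\<in>E. inc e \<subseteq> V"
  shows "\<exists>S. even_one_factor_subgraph V E inc S"
proof -
  have U: "\<Union>P = E" and dj: "disjoint P" and pr: "\<forall>p\<in>P. \<exists>e e'. p = {e, e'} \<and> e \<noteq> e' \<and> inc e \<inter> inc e' \<noteq> {}"
    using P unfolding intersecting_pair_partition_def partition_on_def by auto
  have "\<forall>p\<in>P. \<exists>v. \<forall>e\<in>p. v \<in> inc e" using pr by fastforce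
  then obtain c where c: "\<And>p e. p \<in> P \<Longrightarrow> e \<in> p \<Longrightarrow> c p \<in> inc e" by metis
  have same: "p = q" if "p \<in> P" "q \<in> P" "e \<in> p" "e \<in> q" for p q e
    using dj that unfolding pairwise_def disjnt_def by blast
  have card2: "card p = 2" if "p \<in> P" for p using pr that by (metis card_2_iff)
  have finP: "finite P" using U finE by (metis finite_UnionD)
  define S where "S = {(c p, e) | p e. p \<in> P \<and> e \<in> p}"
  have "S \<subseteq> incidence_edges V E inc"
    unfolding S_def incidence_edges_def using c U sub by blast
  moreover have "\<forall>e\<in>E. card {v. (v, e) \<in> S} = 1"
  proof
    fix e assume "e \<in> E"
    then obtain p where p: "p \<in> P" "e \<in> p" using U by auto
    have "{v. (v, e) \<in> S} = {c p}" unfolding S_def using p same by blast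
    then show "card {v. (v, e) \<in> S} = 1" by simp
  qed
  moreover have "\<forall>v\<in>V. even (card {e. (v, e) \<in> S})"
  proof
    fix v assume "v \<in> V"
    define Q where "Q = {p\<in>P. c p = v}"
    have eq: "{e. (v, e) \<in> S} = \<Union>Q" unfolding S_def Q_def by blast
    have "card (\<Union>Q) = sum card Q"
      by (rule card_Union_disjoint) (use dj Q_def finP card2 in \<open>auto simp: pairwise_def intro: card_ge_0_finite\<close>)
    also have "\<dots> = sum (\<lambda>_. 2) Q" using card2 Q_def by (intro sum.cong) auto
    finally show "even (card {e. (v, e) \<in> S})" using eq by simp
  qed
  ultimately show ?thesis unfolding even_one_factor_subgraph_def by blast
qed



lemma one_to_two:
  assumes F: "euler_family V E inc F" and u3: "uniform3 E inc"
    and ev: "\<forall>v\<in>V. even (hdegree E inc v)" and finE: "finite E" and sub: "\<forall>e\<in>E. inc e \<subseteq> V"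
  shows "\<exists>S. even_one_factor_subgraph V E inc S"
proof -
  have tr: "\<And>T. T \<in> F \<Longrightarrow> closed_strict_trail V E inc (fst T) (snd T)"
   and un: "\<forall>e\<in>E. \<exists>!T. T \<in> F \<and> e \<in> set (snd T)"
   and dj: "\<forall>T\<in>F. \<forall>T'\<in>F. T \<noteq> T' \<longrightarrow> set (fst T) \<inter> set (fst T') = {}"
    using F unfolding euler_family_def by auto
  have trd: "length (fst T) = Suc (length (snd T))" "set (fst T) \<subseteq> V" "set (snd T) \<subseteq> E"
     "\<forall>i<length (snd T). fst T ! i \<noteq> fst T ! Suc i \<and> fst T ! i \<in> inc (snd T ! i) \<and> fst T ! Suc i \<in> inc (snd T ! i)"
     "2 \<le> length (snd T)" "hd (fst T) = last (fst T)" "distinct (snd T)" if "T \<in> F" for T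
    using tr[OF that] unfolding closed_strict_trail_def is_walk_def by auto
  define D where "D e = (SOME d. \<exists>T\<in>F. \<exists>i<length (snd T). snd T ! i = e \<and> d = {fst T ! i, fst T ! Suc i})" for e
  have Dnth: "D (snd T ! i) = {fst T ! i, fst T ! Suc i}" if T: "T \<in> F" "i < length (snd T)" for T i
  proof -
    let ?e = "snd T ! i"
    have ex: "\<exists>d. \<exists>T'\<in>F. \<exists>j<length (snd T'). snd T' ! j = ?e \<and> d = {fst T' ! j, fst T' ! Suc j}"
      using T by blast
    have "\<exists>T'\<in>F. \<exists>j<length (snd T'). snd T' ! j = ?e \<and> D ?e = {fst T' ! j, fst T' ! Suc j}"
      unfolding D_def by (rule someI_ex[OF ex])
    then obtain T' j where T': "T' \<in> F" "j < length (snd T')" "snd T' ! j = ?e"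
      "D ?e = {fst T' ! j, fst T' ! Suc j}" by blast
    have eE: "?e \<in> E" using trd(3)[OF T(1)] T(2) nth_mem by blast
    have "?e \<in> set (snd T)" "?e \<in> set (snd T')" using T T' nth_mem by (blast, metis nth_mem)
    then have "T' = T" using un eE T(1) T'(1) by blast
    then have "j = i" using T'(2,3) T(2) trd(7)[OF T(1)] nth_eq_iff_index_eq by blast
    then show ?thesis using T'(4) \<open>T' = T\<close> by simp
  qed
  have wkD: "wk D (fst T) (snd T)" if "T \<in> F" for T
    unfolding wk_nth using trd(1,4)[OF that] Dnth[OF that] by auto
  have inE: "\<exists>T\<in>F. \<exists>i<length (snd T). snd T ! i = e" if "e \<in> E" for e
    using un that by (metis in_set_conv_nth)
  have c2: "card (D e) = 2" and Dsub: "D e \<subseteq> inc e" if eE: "e \<in> E" for e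
  proof -
    obtain T i where T: "T \<in> F" "i < length (snd T)" "snd T ! i = e" using inE[OF eE] by blast
    show "card (D e) = 2" using Dnth[OF T(1,2)] trd(4)[OF T(1)] T by auto
    show "D e \<subseteq> inc e" using Dnth[OF T(1,2)] trd(4)[OF T(1)] T by auto
  qed
  have Danch: "D e \<subseteq> set (fst T)" if "T \<in> F" "e \<in> set (snd T)" for T e
    using wk_edge_sub[OF wkD[OF that(1)] _ that(2)] c2 trd(3)[OF that(1)] by blast
  have evD: "even (card {e\<in>E. v \<in> D e})" for v
  proof (cases "\<exists>T\<in>F. v \<in> set (fst T)")
    case True
    then obtain T where T: "T \<in> F" "v \<in> set (fst T)" by blast
    have "{e\<in>E. v \<in> D e} = {e\<in>set (snd T). v \<in> D e}"
    proof
      show "{e\<in>set (snd T). v \<in> D e} \<subseteq> {e\<in>E. v \<in> D e}" using trd(3)[OF T(1)] by blast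
      show "{e\<in>E. v \<in> D e} \<subseteq> {e\<in>set (snd T). v \<in> D e}"
      proof
        fix e assume e: "e \<in> {e\<in>E. v \<in> D e}"
        then obtain T' where T': "T' \<in> F" "e \<in> set (snd T')" using un by blast
        have "v \<in> set (fst T')" using Danch[OF T'] e by blast
        then have "T' = T" using dj T T' by blast
        then show "e \<in> {e\<in>set (snd T). v \<in> D e}" using T' e by blast
      qed
    qed
    moreover have "even (card {e\<in>set (snd T). v \<in> D e})"
      using wk_even[OF wkD[OF T(1)]] c2 trd(3,6,7)[OF T(1)] by blast
    ultimately show ?thesis by simp
  next
    case False
    have "{e\<in>E. v \<in> D e} = {}"
    proof (rule ccontr)
      assume "{e\<in>E. v \<in> D e} \<noteq> {}"
      then obtain e where e: "e \<in> E" "v \<in> D e" by blast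
      then obtain T where "T \<in> F" "e \<in> set (snd T)" using un by blast
      then show False using Danch e False by blast
    qed
    then show ?thesis by (metis card.empty dvd_0_right)
  qed
  define S where "S = {(v,e). v \<in> V \<and> e \<in> E \<and> v \<in> inc e \<and> v \<notin> D e}"
  have "S \<subseteq> incidence_edges V E inc" unfolding S_def incidence_edges_def by auto
  moreover have "\<forall>v\<in>V. even (card {e. (v, e) \<in> S})"
  proof
    fix v assume v: "v \<in> V"
    have eq: "{e. (v, e) \<in> S} = {e\<in>E. v \<in> inc e} - {e\<in>E. v \<in> D e}" unfolding S_def using v by auto
    have ss: "{e\<in>E. v \<in> D e} \<subseteq> {e\<in>E. v \<in> inc e}" using Dsub by blast
    have "card {e. (v, e) \<in> S} = card {e\<in>E. v \<in> inc e} - card {e\<in>E. v \<in> D e}"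
      unfolding eq by (rule card_Diff_subset) (use finE ss in auto)
    moreover have "card {e\<in>E. v \<in> D e} \<le> card {e\<in>E. v \<in> inc e}" using card_mono[OF _ ss] finE by auto
    moreover have "even (card {e\<in>E. v \<in> inc e})" using ev v unfolding hdegree_def by auto
    ultimately show "even (card {e. (v, e) \<in> S})" using evD[of v] by auto
  qed
  moreover have "\<forall>e\<in>E. card {v. (v, e) \<in> S} = 1"
  proof
    fix e assume e: "e \<in> E"
    have eq: "{v. (v, e) \<in> S} = inc e - D e" unfolding S_def using e sub by auto
    have "card (inc e) = 3" using u3 e unfolding uniform3_def by auto
    then have "finite (inc e)" by (metis card.infinite zero_neq_numeral)
    then have "card (inc e - D e) = card (inc e) - card (D e)"
      using Dsub[OF e] by (metis card_Diff_subset finite_subset)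
    then show "card {v. (v, e) \<in> S} = 1" using eq c2[OF e] \<open>card (inc e) = 3\<close> by simp
  qed
  ultimately show ?thesis unfolding even_one_factor_subgraph_def by blast
qed

lemma two_to_one:
  assumes S: "even_one_factor_subgraph V E inc S" and u3: "uniform3 E inc"
    and ev: "\<forall>v\<in>V. even (hdegree E inc v)" and finE: "finite E" and sub: "\<forall>e\<in>E. inc e \<subseteq> V"
  shows "quasi_eulerian V E inc"
proof -
  note Sd = S[unfolded even_one_factor_subgraph_def]
  have Ssub: "\<And>v e. (v,e) \<in> S \<Longrightarrow> v \<in> V \<and> e \<in> E \<and> v \<in> inc e"
    using Sd unfolding incidence_edges_def by auto
  define D where "D e = inc e - {v. (v,e) \<in> S}" for e
  have Dsub: "D e \<subseteq> inc e" for e unfolding D_def by auto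
  have c2: "\<forall>e\<in>E. card (D e) = 2"
  proof
    fix e assume e: "e \<in> E"
    have "card (inc e) = 3" using u3 e unfolding uniform3_def by auto
    then have fin: "finite (inc e)" by (metis card.infinite zero_neq_numeral)
    have ss: "{v. (v,e) \<in> S} \<subseteq> inc e" using Ssub by auto
    have "card (D e) = card (inc e) - card {v. (v,e) \<in> S}"
      unfolding D_def by (rule card_Diff_subset) (use fin ss finite_subset in auto)
    then show "card (D e) = 2" using Sd e \<open>card (inc e) = 3\<close> by simp
  qed
  have evD: "\<forall>v. even (card {e\<in>E. v \<in> D e})"
  proof
    fix v
    show "even (card {e\<in>E. v \<in> D e})"
    proof (cases "v \<in> V")
      case True
      have eq: "{e\<in>E. v \<in> D e} = {e\<in>E. v \<in> inc e} - {e. (v,e) \<in> S}" unfolding D_def using Ssub by auto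
      have ss: "{e. (v,e) \<in> S} \<subseteq> {e\<in>E. v \<in> inc e}" using Ssub by auto
      have "card {e\<in>E. v \<in> D e} = card {e\<in>E. v \<in> inc e} - card {e. (v,e) \<in> S}"
        unfolding eq by (rule card_Diff_subset) (use finite_subset[OF ss] finE ss in auto)
      moreover have "card {e. (v,e) \<in> S} \<le> card {e\<in>E. v \<in> inc e}" using card_mono[OF _ ss] finE by auto
      moreover have "even (card {e\<in>E. v \<in> inc e})" using ev True unfolding hdegree_def by auto
      moreover have "even (card {e. (v,e) \<in> S})" using Sd True by auto
      ultimately show ?thesis by auto
    next
      case False
      then have "{e\<in>E. v \<in> D e} = {}" using sub Dsub by blast
      then show ?thesis by (metis card.empty dvd_0_right)
    qed
  qed
  obtain F where F: "finite F" "\<forall>T\<in>F. ct D E T" "\<forall>e\<in>E. \<exists>!T. T \<in> F \<and> e \<in> set (snd T)"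
      "\<forall>T\<in>F. \<forall>T'\<in>F. T \<noteq> T' \<longrightarrow> set (fst T) \<inter> set (fst T') = {}"
    using euler[OF finE c2 evD] by blast
  have "closed_strict_trail V E inc (fst T) (snd T)" if T: "T \<in> F" for T
  proof -
    have c: "wk D (fst T) (snd T)" "distinct (snd T)" "set (snd T) \<subseteq> E" "2 \<le> length (snd T)"
       "hd (fst T) = last (fst T)" using F(2) T unfolding ct_def by auto
    have wi: "wk inc (fst T) (snd T)" using wk_mono[OF c(1)] Dsub by blast
    have "snd T \<noteq> []" using c(4) by auto
    then have "set (fst T) \<subseteq> \<Union>(D ` set (snd T))" using wk_set[OF c(1)] by blast
    also have "\<dots> \<subseteq> V" using c(3) sub Dsub by blast
    finally have sv: "set (fst T) \<subseteq> V" .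
    have "is_walk V E inc (fst T) (snd T)" unfolding is_walk_def using wi[unfolded wk_nth] sv c(3) by blast
    then show ?thesis unfolding closed_strict_trail_def using c by blast
  qed
  then have "euler_family V E inc F" unfolding euler_family_def using F by blast
  then show ?thesis unfolding quasi_eulerian_def by blast
qed

theorem theorem2p38:
  fixes V :: "'v set" and E :: "'e set" and inc :: "'e \<Rightarrow> 'v set"
  assumes "hypergraph V E inc"
    and "uniform3 E inc"
    and "\<forall>v\<in>V. even (hdegree E inc v)"
  shows "(quasi_eulerian V E inc \<longleftrightarrow> (\<exists>S. even_one_factor_subgraph V E inc S))
       \<and> ((\<exists>S. even_one_factor_subgraph V E inc S) \<longleftrightarrow> (\<exists>P. intersecting_pair_partition E inc P))"
proof -
  have finE: "finite E" and sub: "\<forall>e\<in>E. inc e \<subseteq> V" using assms(1) unfolding hypergraph_def by auto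
  show ?thesis
  proof (intro conjI iffI)
    assume "quasi_eulerian V E inc"
    then obtain F where "euler_family V E inc F" unfolding quasi_eulerian_def by blast
    then show "\<exists>S. even_one_factor_subgraph V E inc S" using one_to_two assms(2,3) finE sub by blast
  next
    assume "\<exists>S. even_one_factor_subgraph V E inc S"
    then show "quasi_eulerian V E inc" using two_to_one assms(2,3) finE sub by blast
  next
    assume "\<exists>S. even_one_factor_subgraph V E inc S"
    then show "\<exists>P. intersecting_pair_partition E inc P" using two_to_three finE by blast
  next
    assume "\<exists>P. intersecting_pair_partition E inc P"
    then show "\<exists>S. even_one_factor_subgraph V E inc S" using three_to_two finE sub by blast
  qed
qed

end
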